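(* Let $k\ge 1$ and let $G$ be a graph of order $n$ with minimum degree $\delta\ge k+1$. Then $\Gamma_{\times k,t}(G)\le n-\delta+k$. Moreover the bound is sharp: for all integers $\delta\ge k+1\ge 2$ and $b\ge\lceil \delta/(k+1)\rceil$, the join $G_b=H_b\vee T$, where $H_b$ is the disjoint union of $b$ copies of $K_{k+1}$ and $T$ is an edgeless graph on $\delta-k$ vertices, has minimum degree $\delta$, order $n=b(k+1)+\delta-k$, and $\Gamma_{\times k,t}(G_b)=n-\delta+k$.
   Context: A set $S\subseteq V(G)$ is a $k$-tuple total dominating set ($k$TDS) of a graph $G$ with $\delta(G)\ge k$ if $|N_G(x)\cap S|\ge k$ for every $x\in V(G)$. The upper $k$-tuple total domination number $\Gamma_{\times k,t}(G)$ is the maximum cardinality of a minimal (with respect to inclusion) $k$TDS of $G$. The join $A\vee B$ of disjoint graphs is their union together with all edges between $V(A)$ and $V(B)$. *)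

theory Defs
  imports Complex_Main
begin

definition simple_graph :: "'a set \<Rightarrow> ('a \<Rightarrow> 'a \<Rightarrow> bool) \<Rightarrow> bool" where
  "simple_graph V E \<longleftrightarrow> finite V \<and> (\<forall>x y. E x y \<longrightarrow> x \<in> V \<and> y \<in> V)
     \<and> (\<forall>x y. E x y \<longrightarrow> E y x) \<and> (\<forall>x. \<not> E x x)"

definition nbhd :: "'a set \<Rightarrow> ('a \<Rightarrow> 'a \<Rightarrow> bool) \<Rightarrow> 'a \<Rightarrow> 'a set" where
  "nbhd V E x = {y \<in> V. E x y}"

definition degree :: "'a set \<Rightarrow> ('a \<Rightarrow> 'a \<Rightarrow> bool) \<Rightarrow> 'a \<Rightarrow> nat" where
  "degree V E x = card (nbhd V E x)"

definition min_degree :: "'a set \<Rightarrow> ('a \<Rightarrow> 'a \<Rightarrow> bool) \<Rightarrow> nat" where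
  "min_degree V E = Min (degree V E ` V)"

definition is_kTDS :: "'a set \<Rightarrow> ('a \<Rightarrow> 'a \<Rightarrow> bool) \<Rightarrow> nat \<Rightarrow> 'a set \<Rightarrow> bool" where
  "is_kTDS V E k S \<longleftrightarrow> S \<subseteq> V \<and> (\<forall>x\<in>V. card (nbhd V E x \<inter> S) \<ge> k)"

definition is_minimal_kTDS :: "'a set \<Rightarrow> ('a \<Rightarrow> 'a \<Rightarrow> bool) \<Rightarrow> nat \<Rightarrow> 'a set \<Rightarrow> bool" where
  "is_minimal_kTDS V E k S \<longleftrightarrow> is_kTDS V E k S \<and> (\<forall>T. T \<subset> S \<longrightarrow> \<not> is_kTDS V E k T)"

definition upper_ktuple_tdom :: "'a set \<Rightarrow> ('a \<Rightarrow> 'a \<Rightarrow> bool) \<Rightarrow> nat \<Rightarrow> nat" where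
  "upper_ktuple_tdom V E k = Max {card S | S. is_minimal_kTDS V E k S}"

definition join_V :: "'a set \<Rightarrow> 'b set \<Rightarrow> ('a + 'b) set" where
  "join_V VA VB = Inl ` VA \<union> Inr ` VB"

fun join_E :: "'a set \<Rightarrow> ('a \<Rightarrow> 'a \<Rightarrow> bool) \<Rightarrow> 'b set \<Rightarrow> ('b \<Rightarrow> 'b \<Rightarrow> bool)
    \<Rightarrow> ('a + 'b) \<Rightarrow> ('a + 'b) \<Rightarrow> bool" where
  "join_E VA EA VB EB (Inl x) (Inl y) = EA x y"
| "join_E VA EA VB EB (Inr x) (Inr y) = EB x y"
| "join_E VA EA VB EB (Inl x) (Inr y) = (x \<in> VA \<and> y \<in> VB)"
| "join_E VA EA VB EB (Inr x) (Inl y) = (x \<in> VB \<and> y \<in> VA)"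

text \<open>H_b: disjoint union of b copies of K_{k+1}; vertex (i,j) is vertex j of copy i.\<close>
definition Hb_V :: "nat \<Rightarrow> nat \<Rightarrow> (nat \<times> nat) set" where
  "Hb_V b k = {(i, j). i < b \<and> j < k + 1}"

definition Hb_E :: "nat \<Rightarrow> nat \<Rightarrow> (nat \<times> nat) \<Rightarrow> (nat \<times> nat) \<Rightarrow> bool" where
  "Hb_E b k u v \<longleftrightarrow> u \<in> Hb_V b k \<and> v \<in> Hb_V b k \<and> fst u = fst v \<and> snd u \<noteq> snd v"

definition T_V :: "nat \<Rightarrow> nat set" where
  "T_V m = {..<m}"

definition T_E :: "nat \<Rightarrow> nat \<Rightarrow> bool" where
  "T_E x y = False"

definition Gb_V :: "nat \<Rightarrow> nat \<Rightarrow> nat \<Rightarrow> ((nat \<times> nat) + nat) set" where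
  "Gb_V b k \<delta> = join_V (Hb_V b k) (T_V (\<delta> - k))"

definition Gb_E :: "nat \<Rightarrow> nat \<Rightarrow> nat \<Rightarrow> ((nat \<times> nat) + nat) \<Rightarrow> ((nat \<times> nat) + nat) \<Rightarrow> bool" where
  "Gb_E b k \<delta> = join_E (Hb_V b k) (Hb_E b k) (T_V (\<delta> - k)) T_E"

end

theory Submission
  imports Defs
begin

lemma part1_single:
  assumes sg: "simple_graph V E" and k: "k \<ge> 1"
    and md: "\<And>x. x \<in> V \<Longrightarrow> degree V E x \<ge> d" and Vne: "V \<noteq> {}"
    and S: "is_minimal_kTDS V E k S"
  shows "card S + d \<le> card V + k"
proof -
  have fin: "finite V" using sg by (simp add: simple_graph_def)
  have SV: "S \<subseteq> V" and dom: "\<forall>x\<in>V. card (nbhd V E x \<inter> S) \<ge> k"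
    using S by (auto simp: is_minimal_kTDS_def is_kTDS_def)
  obtain x0 where "x0 \<in> V" using Vne by auto
  with dom k have "card (nbhd V E x0 \<inter> S) \<ge> 1" by auto
  hence "S \<noteq> {}" by auto
  then obtain v where v: "v \<in> S" by auto
  have "S - {v} \<subset> S" using v by auto
  hence "\<not> is_kTDS V E k (S - {v})" using S by (auto simp: is_minimal_kTDS_def)
  then obtain x where x: "x \<in> V" and lt: "card (nbhd V E x \<inter> (S - {v})) < k"
    using SV by (auto simp: is_kTDS_def not_le)
  have finN: "finite (nbhd V E x)" using fin by (simp add: nbhd_def)
  have eq: "nbhd V E x \<inter> (S - {v}) = (nbhd V E x \<inter> S) - {v}" by auto
  have "card (nbhd V E x \<inter> S) \<le> card (nbhd V E x \<inter> (S - {v})) + 1"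
  proof (cases "v \<in> nbhd V E x \<inter> S")
    case True
    then show ?thesis unfolding eq using finN
      by (metis card.remove finite_Int le_refl Suc_eq_plus1)
  next
    case False
    then show ?thesis unfolding eq by simp
  qed
  hence cS: "card (nbhd V E x \<inter> S) \<le> k" using lt by simp
  have "card (nbhd V E x) = card (nbhd V E x \<inter> S) + card (nbhd V E x - S)"
  proof -
    have "nbhd V E x = (nbhd V E x \<inter> S) \<union> (nbhd V E x - S)" by auto
    hence "card (nbhd V E x) = card ((nbhd V E x \<inter> S) \<union> (nbhd V E x - S))" by simp
    also have "\<dots> = card (nbhd V E x \<inter> S) + card (nbhd V E x - S)"
      using finN by (intro card_Un_disjoint) auto
    finally show ?thesis .
  qed
  moreover have "nbhd V E x - S \<subseteq> V - S" by (auto simp: nbhd_def)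
  hence "card (nbhd V E x - S) \<le> card (V - S)" using fin by (simp add: card_mono)
  moreover have "card V = card S + card (V - S)"
    using SV fin by (simp add: card_Diff_subset card_mono finite_subset)
  moreover have "degree V E x \<ge> d" using md x by auto
  ultimately show ?thesis using cS unfolding degree_def by linarith
qed

lemma exists_minimal:
  assumes fin: "finite V" and T: "is_kTDS V E k T"
  shows "\<exists>S. is_minimal_kTDS V E k S"
proof -
  define P where "P n \<longleftrightarrow> (\<exists>S. is_kTDS V E k S \<and> card S = n)" for n
  have "P (card T)" using T by (auto simp: P_def)
  hence "P (LEAST n. P n)" by (rule LeastI)
  then obtain S where S: "is_kTDS V E k S" "card S = (LEAST n. P n)" by (auto simp: P_def)
  have "\<not> is_kTDS V E k U" if "U \<subset> S" for U
  proof
    assume U: "is_kTDS V E k U"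
    have "finite S" using S(1) fin by (auto simp: is_kTDS_def intro: finite_subset)
    hence "card U < card S" using that psubset_card_mono by blast
    moreover have "(LEAST n. P n) \<le> card U" using U by (intro Least_le) (auto simp: P_def)
    ultimately show False using S(2) by simp
  qed
  thus ?thesis using S(1) by (auto simp: is_minimal_kTDS_def)
qed

lemma part1:
  assumes sg: "simple_graph V E" and Vne: "V \<noteq> {}" and k: "k \<ge> 1"
    and md: "min_degree V E \<ge> k + 1"
  shows "upper_ktuple_tdom V E k + min_degree V E \<le> card V + k"
proof -
  have fin: "finite V" using sg by (simp add: simple_graph_def)
  have dge: "degree V E x \<ge> min_degree V E" if "x \<in> V" for x
    unfolding min_degree_def using fin that by (intro Min_le) auto
  have "is_kTDS V E k V"
    unfolding is_kTDS_def
  proof (intro conjI ballI)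
    fix x assume x: "x \<in> V"
    have "nbhd V E x \<inter> V = nbhd V E x" by (auto simp: nbhd_def)
    thus "k \<le> card (nbhd V E x \<inter> V)" using dge[OF x] md unfolding degree_def by simp
  qed simp
  then obtain S0 where S0: "is_minimal_kTDS V E k S0" using exists_minimal fin by blast
  let ?A = "{card S | S. is_minimal_kTDS V E k S}"
  have finA: "finite ?A"
  proof -
    have "?A \<subseteq> card ` Pow V" by (auto simp: is_minimal_kTDS_def is_kTDS_def)
    thus ?thesis using fin finite_subset by blast
  qed
  have "Max ?A \<le> card V + k - min_degree V E"
  proof (rule Max.boundedI[OF finA])
    show "?A \<noteq> {}" using S0 by auto
    fix a assume "a \<in> ?A"
    then obtain S where "a = card S" "is_minimal_kTDS V E k S" by auto
    thus "a \<le> card V + k - min_degree V E"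
      using part1_single[OF sg k dge Vne] by fastforce
  qed
  moreover have "min_degree V E \<le> card V + k"
  proof -
    obtain x where x: "x \<in> V" using Vne by auto
    have "degree V E x \<le> card V" unfolding degree_def nbhd_def using fin by (intro card_mono) auto
    thus ?thesis using dge[OF x] by simp
  qed
  ultimately show ?thesis unfolding upper_ktuple_tdom_def by simp
qed

lemma Gb_simple: "simple_graph (Gb_V b k d) (Gb_E b k d)"
proof -
  have f: "finite (Gb_V b k d)"
  proof -
    have "Hb_V b k \<subseteq> {..<b} \<times> {..<k+1}" by (auto simp: Hb_V_def)
    hence "finite (Hb_V b k)" using finite_subset by blast
    thus ?thesis by (simp add: Gb_V_def join_V_def T_V_def)
  qed
  have a: "Gb_E b k d x y \<longrightarrow> x \<in> Gb_V b k d \<and> y \<in> Gb_V b k d" for x y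
    by (cases x; cases y) (auto simp: Gb_E_def Gb_V_def join_V_def Hb_E_def T_E_def)
  have b: "Gb_E b k d x y \<longrightarrow> Gb_E b k d y x" for x y
    by (cases x; cases y) (auto simp: Gb_E_def Hb_E_def T_E_def)
  have c: "\<not> Gb_E b k d x x" for x
    by (cases x) (auto simp: Gb_E_def Hb_E_def T_E_def)
  show ?thesis unfolding simple_graph_def using f a b c by blast
qed

lemma card_Hb: "card (Hb_V b k) = b * (k + 1)"
proof -
  have "Hb_V b k = {..<b} \<times> {..<k+1}" by (auto simp: Hb_V_def)
  thus ?thesis by (simp add: card_cartesian_product)
qed

lemma card_Gb: "card (Gb_V b k d) = b * (k + 1) + (d - k)"
proof -
  have fH: "finite (Hb_V b k)"
  proof -
    have "Hb_V b k = {..<b} \<times> {..<k+1}" by (auto simp: Hb_V_def)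
    thus ?thesis by simp
  qed
  have "card (Gb_V b k d) = card (Inl ` Hb_V b k :: ((nat\<times>nat)+nat) set) + card (Inr ` T_V (d - k) :: ((nat\<times>nat)+nat) set)"
    unfolding Gb_V_def join_V_def
    by (rule card_Un_disjoint) (use fH in \<open>auto simp: T_V_def\<close>)
  also have "\<dots> = b * (k + 1) + (d - k)"
    by (simp add: card_image card_Hb T_V_def)
  finally show ?thesis .
qed

lemma nbhd_Inl:
  assumes "(i, j) \<in> Hb_V b k"
  shows "nbhd (Gb_V b k d) (Gb_E b k d) (Inl (i, j))
     = Inl ` ((\<lambda>j'. (i, j')) ` ({..<k+1} - {j})) \<union> Inr ` T_V (d - k)"
  using assms
  apply (auto simp: nbhd_def Gb_E_def Gb_V_def join_V_def Hb_E_def Hb_V_def)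
  done

lemma nbhd_Inr:
  assumes "t \<in> T_V (d - k)"
  shows "nbhd (Gb_V b k d) (Gb_E b k d) (Inr t) = Inl ` Hb_V b k"
  using assms
  by (auto simp: nbhd_def Gb_E_def Gb_V_def join_V_def T_E_def)

lemma card_row: "card ((\<lambda>j'. (i::nat, j')) ` ({..<k+1} - {j})) = (if j < k + 1 then k else k + 1)"
  by (simp add: card_image inj_on_def)

lemma deg_Inl:
  assumes "(i, j) \<in> Hb_V b k" "d \<ge> k"
  shows "degree (Gb_V b k d) (Gb_E b k d) (Inl (i, j)) = d"
proof -
  have j: "j < k + 1" using assms by (auto simp: Hb_V_def)
  have "card (Inl ` ((\<lambda>j'. (i, j')) ` ({..<k+1} - {j})) \<union> Inr ` T_V (d - k)
        :: ((nat\<times>nat)+nat) set)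
      = card (Inl ` ((\<lambda>j'. (i, j')) ` ({..<k+1} - {j})) :: ((nat\<times>nat)+nat) set)
        + card (Inr ` T_V (d - k) :: ((nat\<times>nat)+nat) set)"
    by (rule card_Un_disjoint) (auto simp: T_V_def)
  also have "\<dots> = k + (d - k)"
    using card_row[of i k j] j by (simp add: card_image T_V_def)
  finally show ?thesis unfolding degree_def nbhd_Inl[OF assms(1)] using assms(2) by simp
qed

lemma deg_Inr:
  assumes "t \<in> T_V (d - k)"
  shows "degree (Gb_V b k d) (Gb_E b k d) (Inr t) = b * (k + 1)"
  unfolding degree_def nbhd_Inr[OF assms] by (simp add: card_image card_Hb)

lemma part2:
  assumes k: "k \<ge> 1" and d: "d \<ge> k + 1" and b: "b * (k + 1) \<ge> d"
  shows "min_degree (Gb_V b k d) (Gb_E b k d) = d"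
    and "upper_ktuple_tdom (Gb_V b k d) (Gb_E b k d) k = b * (k + 1)"
proof -
  let ?V = "Gb_V b k d" and ?E = "Gb_E b k d"
  have b1: "b \<ge> 1" using b d by (cases b) auto
  have h0: "(0, 0) \<in> Hb_V b k" using b1 by (auto simp: Hb_V_def)
  have finV: "finite ?V" using Gb_simple[of b k d] by (simp add: simple_graph_def)
  have alld: "degree ?V ?E v \<ge> d" if "v \<in> ?V" for v
  proof (cases v)
    case (Inl a)
    have "a \<in> Hb_V b k" using that Inl by (auto simp: Gb_V_def join_V_def)
    then obtain i j where "v = Inl (i, j)" "(i, j) \<in> Hb_V b k"
      using Inl by (cases a) auto
    thus ?thesis using deg_Inl d by simp
  next
    case (Inr t)
    hence "t \<in> T_V (d - k)" using that by (auto simp: Gb_V_def join_V_def)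
    thus ?thesis using deg_Inr b Inr by simp
  qed
  have inV: "Inl (0, 0) \<in> ?V" using h0 by (simp add: Gb_V_def join_V_def)
  show md: "min_degree ?V ?E = d"
    unfolding min_degree_def
  proof (rule Min_eqI)
    show "finite (degree ?V ?E ` ?V)" using finV by simp
    show "\<And>y. y \<in> degree ?V ?E ` ?V \<Longrightarrow> d \<le> y" using alld by auto
    show "d \<in> degree ?V ?E ` ?V" using deg_Inl[OF h0, of d] d inV by (metis image_eqI le_SucE add_leD1)
  qed
  have up: "upper_ktuple_tdom ?V ?E k + d \<le> card ?V + k"
    using part1[OF Gb_simple[of b k d] _ k] md d inV by auto
  hence le: "upper_ktuple_tdom ?V ?E k \<le> b * (k + 1)" using card_Gb[of b k d] d by simp
  let ?S = "Inl ` Hb_V b k :: ((nat\<times>nat)+nat) set"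
  have SV: "?S \<subseteq> ?V" by (auto simp: Gb_V_def join_V_def)
  have rowS: "nbhd ?V ?E (Inl (i, j)) \<inter> ?S = Inl ` ((\<lambda>j'. (i, j')) ` ({..<k+1} - {j}))"
    if "(i, j) \<in> Hb_V b k" for i j
    using that unfolding nbhd_Inl[OF that] by (auto simp: Hb_V_def)
  have cardrow: "card (Inl ` ((\<lambda>j'. (i, j')) ` ({..<k+1} - {j})) :: ((nat\<times>nat)+nat) set) = k"
    if "(i, j) \<in> Hb_V b k" for i j
    using card_row[of i k j] that by (simp add: card_image Hb_V_def)
  have kS: "is_kTDS ?V ?E k ?S"
    unfolding is_kTDS_def
  proof (intro conjI ballI SV)
    fix v assume v: "v \<in> ?V"
    show "k \<le> card (nbhd ?V ?E v \<inter> ?S)"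
    proof (cases v)
      case (Inl a)
      have "a \<in> Hb_V b k" using v Inl by (auto simp: Gb_V_def join_V_def)
      then obtain i j where "v = Inl (i, j)" "(i, j) \<in> Hb_V b k"
        using Inl by (cases a) auto
      thus ?thesis using rowS cardrow by simp
    next
      case (Inr t)
      hence "t \<in> T_V (d - k)" using v by (auto simp: Gb_V_def join_V_def)
      thus ?thesis using Inr nbhd_Inr[of t d k b] b d by (simp add: card_image card_Hb)
    qed
  qed
  have minS: "is_minimal_kTDS ?V ?E k ?S"
    unfolding is_minimal_kTDS_def
  proof (intro conjI kS allI impI)
    fix T assume T: "T \<subset> ?S"
    then obtain i j where ij: "(i, j) \<in> Hb_V b k" "Inl (i, j) \<notin> T" by auto
    define j' where "j' = (if j = 0 then 1 else 0::nat)"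
    have j'1: "(i, j') \<in> Hb_V b k" "j' \<noteq> j" using ij k by (auto simp: Hb_V_def j'_def)
    have "nbhd ?V ?E (Inl (i, j')) \<inter> T \<subset> nbhd ?V ?E (Inl (i, j')) \<inter> ?S"
    proof -
      have "Inl (i, j) \<in> nbhd ?V ?E (Inl (i, j')) \<inter> ?S"
        using rowS[OF j'1(1)] ij j'1 by (auto simp: Hb_V_def)
      thus ?thesis using T ij by blast
    qed
    hence "card (nbhd ?V ?E (Inl (i, j')) \<inter> T) < k"
      using psubset_card_mono[of "nbhd ?V ?E (Inl (i, j')) \<inter> ?S"] cardrow[OF j'1(1)] rowS[OF j'1(1)]
      by (simp add: Hb_V_def)
    moreover have "Inl (i, j') \<in> ?V" using j'1 by (simp add: Gb_V_def join_V_def)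
    ultimately show "\<not> is_kTDS ?V ?E k T" unfolding is_kTDS_def by force
  qed
  have "card ?S \<le> upper_ktuple_tdom ?V ?E k"
    unfolding upper_ktuple_tdom_def
  proof (rule Max_ge)
    have "{card S | S. is_minimal_kTDS ?V ?E k S} \<subseteq> card ` Pow ?V"
      by (auto simp: is_minimal_kTDS_def is_kTDS_def)
    thus "finite {card S | S. is_minimal_kTDS ?V ?E k S}" using finV finite_subset by blast
    show "card ?S \<in> {card S | S. is_minimal_kTDS ?V ?E k S}" using minS by blast
  qed
  moreover have "card ?S = b * (k + 1)" by (simp add: card_image card_Hb)
  ultimately show "upper_ktuple_tdom ?V ?E k = b * (k + 1)" using le by simp
qed

lemma ceil_bound:
  assumes "real b \<ge> real_of_int \<lceil>real d / real (k + 1)\<rceil>"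
  shows "b * (k + 1) \<ge> d"
proof -
  have "real d / real (k + 1) \<le> real b" using assms le_of_int_ceiling order_trans by blast
  hence "real d \<le> real b * real (k + 1)" by (simp add: divide_le_eq)
  hence "real d \<le> real (b * (k + 1))" by (simp only: of_nat_mult)
  thus ?thesis by linarith
qed

theorem mainTheorem6:
  shows "(\<forall>(V :: 'a set) E k. simple_graph V E \<and> V \<noteq> {} \<and> k \<ge> 1 \<and> min_degree V E \<ge> k + 1
            \<longrightarrow> int (upper_ktuple_tdom V E k) \<le> int (card V) - int (min_degree V E) + int k)
     \<and> (\<forall>k \<delta> b :: nat. k + 1 \<ge> 2 \<and> \<delta> \<ge> k + 1 \<and> real b \<ge> real_of_int \<lceil>real \<delta> / real (k + 1)\<rceil>
            \<longrightarrow> min_degree (Gb_V b k \<delta>) (Gb_E b k \<delta>) = \<delta>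
              \<and> card (Gb_V b k \<delta>) = b * (k + 1) + \<delta> - k
              \<and> int (upper_ktuple_tdom (Gb_V b k \<delta>) (Gb_E b k \<delta>) k)
                  = int (card (Gb_V b k \<delta>)) - int \<delta> + int k)"
proof (intro conjI allI impI)
  fix V :: "'a set" and E k
  assume "simple_graph V E \<and> V \<noteq> {} \<and> k \<ge> 1 \<and> min_degree V E \<ge> k + 1"
  hence "upper_ktuple_tdom V E k + min_degree V E \<le> card V + k" using part1 by blast
  thus "int (upper_ktuple_tdom V E k) \<le> int (card V) - int (min_degree V E) + int k" by linarith
next
  fix k \<delta> b :: nat
  assume A: "k + 1 \<ge> 2 \<and> \<delta> \<ge> k + 1 \<and> real b \<ge> real_of_int \<lceil>real \<delta> / real (k + 1)\<rceil>"
  hence k: "k \<ge> 1" and d: "\<delta> \<ge> k + 1" and bb: "b * (k + 1) \<ge> \<delta>" using ceil_bound by auto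
  show "min_degree (Gb_V b k \<delta>) (Gb_E b k \<delta>) = \<delta>" using part2(1)[OF k d bb] .
  show "card (Gb_V b k \<delta>) = b * (k + 1) + \<delta> - k" using card_Gb[of b k \<delta>] d by simp
  show "int (upper_ktuple_tdom (Gb_V b k \<delta>) (Gb_E b k \<delta>) k)
                  = int (card (Gb_V b k \<delta>)) - int \<delta> + int k"
    using part2(2)[OF k d bb] card_Gb[of b k \<delta>] d by simp
qed

end
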